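(* In the u2D Toda setting described in the context, fix integers $l,m,n$. Then \[ \begin{aligned} &\tau(l+1,m,n)=\max_{0\le k_1\le N}\bigl(\tau_c(-1,N-k_1)-k_1\delta\bigr),\qquad \tau(l,m-1,n)=\max_{0\le k_2\le N}\bigl(\tau_c(k_2-1,N)-k_2\varepsilon\bigr),\\ &\tau(l+1,m,n-1)=\max_{0\le k_1\le N}\bigl(\tau_c(N-k_1-1,N)-k_1\delta\bigr),\qquad \tau(l,m-1,n+1)=\max_{0\le k_2\le N}\bigl(\tau_c(-1,k_2)-k_2\varepsilon\bigr),\\ &\tau(l,m,n)=\tau_c(-1,N),\qquad \tau(l+1,m-1,n)=\max_{0\le k_1,k_2\le N}\bigl(\Psi(k_1,k_2)-k_1\delta-k_2\varepsilon\bigr), \end{aligned} \] where for $0\le k_1,k_2\le N$ \[ \Psi(k_1,k_2)=\begin{cases} \max_{0\le i\le k_2}\tau_c(k_2-i-1,\,N-k_1+i) & (k_1\ge k_2\text{ and }N-k_1\ge k_2),\\ \max_{0\le i\le k_1}\tau_c(k_2-i-1,\,N-k_1+i) & (N-k_1\ge k_2\ge k_1),\\ \max_{0\le i\le N-k_1}\tau_c(i-1,\,N-k_1+k_2-i) & (k_1\ge k_2\ge N-k_1),\\ \max_{0\le i\le N-k_2}\tau_c(N-k_1-i-1,\,k_2+i) & (k_2\ge N-k_1\text{ and }k_2\ge k_1). \end{cases} \] Moreover, for $1\le k_1,k_2\le N$: $\Psi(k_1,k_2)=\max(\Psi(k_1-1,k_2-1),\tau_c(k_2-1,N-k_1))$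 if $k_2-1<N-k_1$; $\Psi(k_1-1,k_2-1)=\max(\Psi(k_1,k_2),\tau_c(N-k_1,k_2-1))$ if $k_2-1>N-k_1$; $\Psi(k_1,k_2)=\Psi(k_1-1,k_2-1)$ if $k_2-1=N-k_1$.
   Context: Ultradiscrete permanent (UP): for a real $N\times N$ matrix $A=(a_{ij})$, $\max A\equiv\max_{\pi}\sum_{i=1}^N a_{i\pi(i)}$ over all permutations $\pi$ of $\{1,\dots,N\}$; $\max[\bm{b}_1\ \dots\ \bm{b}_N]$ is the UP of the matrix with columns $\bm{b}_j$. u2D Toda setting: $N\ge1$; real $\delta,\varepsilon>0$; arbitrary real $r_i,c_i,c'_i$ ($1\le i\le N$); for integers $l,m,n$, $\eta_i(l,m,n)=\max(0,r_i-\delta)l-\max(0,-r_i-\varepsilon)m+r_in+c_i$, $\eta'_i(l,m,n)=\max(0,-r_i-\delta)l-\max(0,r_i-\varepsilon)m-r_in+c'_i$, $\phi_i(l,m,n)=\max(\eta_i(l,m,n),\eta'_i(l,m,n))$, and $\tau(l,m,n)=\max[\phi_i(l,m,n+j-1)]_{1\le i,j\le N}$. With $l,m,n$ fixed put $\bm{\phi}(j)=(\phi_i(l,m,n+j))_{1\le i\le N}$, and for $-1\le\alpha<\beta\le N$ let $\tau_c(\alpha,\beta)=\max[\bm{\phi}(-1)\ \dots\ \widehat{\bm{\phi}(\alpha)}\ \dots\ \widehat{\bm{\phi}(\beta)}\ \dots\ \bm{\phi}(N)]$, the UP of the $N$ columns $\bm{\phi}(j)$, $j\in\{-1,0,\dots,N\}\setminus\{\alpha,\beta\}$.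 *)

theory Defs
  imports Complex_Main "HOL-Combinatorics.Permutations"
begin

definition up :: "nat \<Rightarrow> (nat \<Rightarrow> nat \<Rightarrow> real) \<Rightarrow> real" where
  "up N a = Max ((\<lambda>\<pi>. \<Sum>i=1..N. a i (\<pi> i)) ` {\<pi>. \<pi> permutes {1..N}})"

definition eta :: "(nat \<Rightarrow> real) \<Rightarrow> (nat \<Rightarrow> real) \<Rightarrow> real \<Rightarrow> real \<Rightarrow> nat \<Rightarrow> int \<Rightarrow> int \<Rightarrow> int \<Rightarrow> real" where
  "eta r c \<delta> \<epsilon> i l m n =
     max 0 (r i - \<delta>) * of_int l - max 0 (- r i - \<epsilon>) * of_int m + r i * of_int n + c i"

definition eta' :: "(nat \<Rightarrow> real) \<Rightarrow> (nat \<Rightarrow> real) \<Rightarrow> real \<Rightarrow> real \<Rightarrow> nat \<Rightarrow> int \<Rightarrow> int \<Rightarrow> int \<Rightarrow> real" where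
  "eta' r c' \<delta> \<epsilon> i l m n =
     max 0 (- r i - \<delta>) * of_int l - max 0 (r i - \<epsilon>) * of_int m - r i * of_int n + c' i"

definition phi :: "(nat \<Rightarrow> real) \<Rightarrow> (nat \<Rightarrow> real) \<Rightarrow> (nat \<Rightarrow> real) \<Rightarrow> real \<Rightarrow> real \<Rightarrow> nat \<Rightarrow> int \<Rightarrow> int \<Rightarrow> int \<Rightarrow> real" where
  "phi r c c' \<delta> \<epsilon> i l m n = max (eta r c \<delta> \<epsilon> i l m n) (eta' r c' \<delta> \<epsilon> i l m n)"

definition tau :: "nat \<Rightarrow> (nat \<Rightarrow> real) \<Rightarrow> (nat \<Rightarrow> real) \<Rightarrow> (nat \<Rightarrow> real) \<Rightarrow> real \<Rightarrow> real \<Rightarrow> int \<Rightarrow> int \<Rightarrow> int \<Rightarrow> real" where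
  "tau N r c c' \<delta> \<epsilon> l m n = up N (\<lambda>i j. phi r c c' \<delta> \<epsilon> i l m (n + int j - 1))"

definition tauc :: "nat \<Rightarrow> (nat \<Rightarrow> real) \<Rightarrow> (nat \<Rightarrow> real) \<Rightarrow> (nat \<Rightarrow> real) \<Rightarrow> real \<Rightarrow> real \<Rightarrow> int \<Rightarrow> int \<Rightarrow> int \<Rightarrow> int \<Rightarrow> int \<Rightarrow> real" where
  "tauc N r c c' \<delta> \<epsilon> l m n \<alpha> \<beta> =
     up N (\<lambda>i k. phi r c c' \<delta> \<epsilon> i l m
             (n + sorted_list_of_set ({-1..int N} - {\<alpha>, \<beta>}) ! (k - 1)))"

text \<open>Psi(k1,k2), by the four (consistent on overlaps) cases of the paper.\<close>
definition Psi :: "nat \<Rightarrow> (nat \<Rightarrow> real) \<Rightarrow> (nat \<Rightarrow> real) \<Rightarrow> (nat \<Rightarrow> real) \<Rightarrow> real \<Rightarrow> real \<Rightarrow> int \<Rightarrow> int \<Rightarrow> int \<Rightarrow> nat \<Rightarrow> nat \<Rightarrow> real" where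
  "Psi N r c c' \<delta> \<epsilon> l m n k1 k2 =
    (let tc = tauc N r c c' \<delta> \<epsilon> l m n; K1 = int k1; K2 = int k2; NN = int N in
     if K1 \<ge> K2 \<and> NN - K1 \<ge> K2 then
       Max ((\<lambda>i. tc (K2 - int i - 1) (NN - K1 + int i)) ` {0..k2})
     else if NN - K1 \<ge> K2 \<and> K2 \<ge> K1 then
       Max ((\<lambda>i. tc (K2 - int i - 1) (NN - K1 + int i)) ` {0..k1})
     else if K1 \<ge> K2 \<and> K2 \<ge> NN - K1 then
       Max ((\<lambda>i. tc (int i - 1) (NN - K1 + K2 - int i)) ` {0..N - k1})
     else
       Max ((\<lambda>i. tc (NN - K1 - int i - 1) (K2 + int i)) ` {0..N - k2}))"

end

theory Submission
  imports Defs "HOL-Combinatorics.Permutations"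
begin


lemma perms_fin: "finite {\<pi>. \<pi> permutes {1..(N::nat)}}" by (simp add: finite_permutations)
lemma perms_ne: "{\<pi>. \<pi> permutes {1..(N::nat)}} \<noteq> {}" using permutes_id by blast

lemma pin: "\<pi> permutes {1..N} \<Longrightarrow> i \<in> {1..N} \<Longrightarrow> \<pi> i \<in> {1..(N::nat)}"
  by (metis permutes_in_image)

lemma up_ge: "\<pi> permutes {1..N} \<Longrightarrow> (\<Sum>i=1..N. a i (\<pi> i)) \<le> up N a"
  unfolding up_def using perms_fin by (intro Max_ge) auto

lemma up_obtain: "\<exists>\<pi>. \<pi> permutes {1..N} \<and> up N a = (\<Sum>i=1..N. a i (\<pi> i))"
proof -
  have "up N a \<in> (\<lambda>\<pi>. \<Sum>i=1..N. a i (\<pi> i)) ` {\<pi>. \<pi> permutes {1..N}}"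
    unfolding up_def using perms_fin perms_ne by (intro Max_in) auto
  then show ?thesis by auto
qed

lemma up_perm_le:
  assumes t: "\<tau> permutes {1..N}" and h: "\<And>i j. i \<in> {1..N} \<Longrightarrow> j \<in> {1..N} \<Longrightarrow> a i j \<le> b i (\<tau> j)"
  shows "up N a \<le> up N b"
proof -
  obtain \<pi> where p: "\<pi> permutes {1..N}" "up N a = (\<Sum>i=1..N. a i (\<pi> i))" using up_obtain by blast
  have "(\<Sum>i=1..N. a i (\<pi> i)) \<le> (\<Sum>i=1..N. b i ((\<tau> \<circ> \<pi>) i))"
  proof (intro sum_mono)
    fix i assume i: "i \<in> {1..N}"
    then have "\<pi> i \<in> {1..N}" using pin p(1) by blast
    then show "a i (\<pi> i) \<le> b i ((\<tau> \<circ> \<pi>) i)" using h i by simp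
  qed
  also have "\<dots> \<le> up N b" by (rule up_ge) (rule permutes_compose[OF p(1) t])
  finally show ?thesis using p by simp
qed

lemma up_mono:
  assumes h: "\<And>i j. i \<in> {1..N} \<Longrightarrow> j \<in> {1..N} \<Longrightarrow> a i j \<le> b i j"
  shows "up N a \<le> up N b"
  using up_perm_le[of id N a b] h by auto

lemma up_cong:
  assumes h: "\<And>i j. i \<in> {1..N} \<Longrightarrow> j \<in> {1..N} \<Longrightarrow> a i j = b i j"
  shows "up N a = up N b"
  by (intro antisym up_mono) (auto simp: h)

lemma up_exch:
  assumes t: "\<tau> permutes {1..N}" and h: "\<And>i j. i \<in> {1..N} \<Longrightarrow> j \<in> {1..N} \<Longrightarrow> 2 * a i j \<le> b i j + b i (\<tau> j)"
  shows "up N a \<le> up N b"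
proof -
  obtain \<pi> where p: "\<pi> permutes {1..N}" "up N a = (\<Sum>i=1..N. a i (\<pi> i))" using up_obtain by blast
  have "2 * (\<Sum>i=1..N. a i (\<pi> i)) \<le> (\<Sum>i=1..N. b i (\<pi> i)) + (\<Sum>i=1..N. b i ((\<tau> \<circ> \<pi>) i))"
    unfolding sum_distrib_left sum.distrib[symmetric]
  proof (intro sum_mono)
    fix i assume i: "i \<in> {1..N}"
    have pi: "\<pi> i \<in> {1..N}" using pin p(1) i by blast
    show "2 * a i (\<pi> i) \<le> b i (\<pi> i) + b i ((\<tau> \<circ> \<pi>) i)" using h[OF i pi] by (simp only: comp_apply)
  qed
  also have "\<dots> \<le> up N b + up N b"
    by (intro add_mono up_ge p(1) permutes_compose[OF p(1) t])
  finally show ?thesis using p by simp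
qed

lemma sum_perm_col: "\<pi> permutes {1..N} \<Longrightarrow> (\<Sum>i=1..N. g (\<pi> i)) = (\<Sum>j=1..(N::nat). g j)"
proof -
  assume p: "\<pi> permutes {1..N}"
  have "sum (g \<circ> \<pi>) {1..N} = sum g {1..N}" by (rule sum.permute[OF p, symmetric])
  then show ?thesis unfolding comp_def .
qed

lemma up_minus_col: "up N (\<lambda>i j. a i j - g j) = up N a - (\<Sum>j=1..N. g j)"
proof (rule antisym)
  obtain \<pi> where p: "\<pi> permutes {1..N}" "up N (\<lambda>i j. a i j - g j) = (\<Sum>i=1..N. a i (\<pi> i) - g (\<pi> i))"
    using up_obtain[of N "\<lambda>i j. a i j - g j"] by blast
  have "(\<Sum>i=1..N. a i (\<pi> i) - g (\<pi> i)) = (\<Sum>i=1..N. a i (\<pi> i)) - (\<Sum>j=1..N. g j)"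
    using sum_perm_col[OF p(1), of g] by (simp add: sum_subtractf)
  also have "\<dots> \<le> up N a - (\<Sum>j=1..N. g j)" using up_ge[OF p(1)] by simp
  finally show "up N (\<lambda>i j. a i j - g j) \<le> up N a - (\<Sum>j=1..N. g j)" using p by simp
next
  obtain \<pi> where p: "\<pi> permutes {1..N}" "up N a = (\<Sum>i=1..N. a i (\<pi> i))"
    using up_obtain[of N a] by blast
  have "up N a - (\<Sum>j=1..N. g j) = (\<Sum>i=1..N. a i (\<pi> i) - g (\<pi> i))"
    using sum_perm_col[OF p(1), of g] by (simp add: sum_subtractf p(2))
  also have "\<dots> \<le> up N (\<lambda>i j. a i j - g j)" using up_ge[OF p(1), of "\<lambda>i j. a i j - g j"] by simp
  finally show "up N a - (\<Sum>j=1..N. g j) \<le> up N (\<lambda>i j. a i j - g j)" .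
qed

lemma up_max_expand:
  assumes T: "finite T" "T \<noteq> {}"
  shows "up N (\<lambda>i j. Max ((\<lambda>t. f t i j) ` T)) = Max ((\<lambda>e. up N (\<lambda>i j. f (e j) i j)) ` (PiE {1..N} (\<lambda>_. T)))"
proof (rule antisym)
  have fin: "finite (PiE {1..N} (\<lambda>_. T))" using T by (simp add: finite_PiE)
  obtain \<pi> where p: "\<pi> permutes {1..N}" "up N (\<lambda>i j. Max ((\<lambda>t. f t i j) ` T)) = (\<Sum>i=1..N. Max ((\<lambda>t. f t i (\<pi> i)) ` T))"
    using up_obtain by blast
  define e where "e = restrict (\<lambda>j. SOME t. t \<in> T \<and> f t (inv \<pi> j) j = Max ((\<lambda>t. f t (inv \<pi> j) j) ` T)) {1..N}"
  have ex: "\<exists>t. t \<in> T \<and> f t i j = Max ((\<lambda>t. f t i j) ` T)" for i j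
  proof -
    have "Max ((\<lambda>t. f t i j) ` T) \<in> (\<lambda>t. f t i j) ` T" using T by (intro Max_in) auto
    then show ?thesis by force
  qed
  have eT: "e j \<in> T \<and> f (e j) (inv \<pi> j) j = Max ((\<lambda>t. f t (inv \<pi> j) j) ` T)" if "j \<in> {1..N}" for j
    using someI_ex[OF ex[of "inv \<pi> j" j]] that unfolding e_def by simp
  have eP: "e \<in> PiE {1..N} (\<lambda>_. T)" using eT unfolding e_def by auto
  have "(\<Sum>i=1..N. Max ((\<lambda>t. f t i (\<pi> i)) ` T)) = (\<Sum>i=1..N. f (e (\<pi> i)) i (\<pi> i))"
  proof (rule sum.cong)
    fix i assume i: "i \<in> {1..N}"
    then have "\<pi> i \<in> {1..N}" using p(1) pin by blast
    from eT[OF this] show "Max ((\<lambda>t. f t i (\<pi> i)) ` T) = f (e (\<pi> i)) i (\<pi> i)"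
      by (simp add: permutes_inverses(2)[OF p(1)])
  qed simp
  also have "\<dots> \<le> up N (\<lambda>i j. f (e j) i j)" by (rule up_ge[OF p(1)])
  also have "\<dots> \<le> Max ((\<lambda>e. up N (\<lambda>i j. f (e j) i j)) ` (PiE {1..N} (\<lambda>_. T)))"
    using fin eP by (intro Max_ge) auto
  finally show "up N (\<lambda>i j. Max ((\<lambda>t. f t i j) ` T)) \<le> Max ((\<lambda>e. up N (\<lambda>i j. f (e j) i j)) ` (PiE {1..N} (\<lambda>_. T)))"
    using p by simp
next
  have fin: "finite (PiE {1..N} (\<lambda>_. T))" using T by (simp add: finite_PiE)
  have ne: "PiE {1..N} (\<lambda>_. T) \<noteq> {}" using T by (simp add: PiE_eq_empty_iff)
  show "Max ((\<lambda>e. up N (\<lambda>i j. f (e j) i j)) ` (PiE {1..N} (\<lambda>_. T))) \<le> up N (\<lambda>i j. Max ((\<lambda>t. f t i j) ` T))"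
  proof -
    have "\<forall>e\<in>PiE {1..N} (\<lambda>_. T). up N (\<lambda>i j. f (e j) i j) \<le> up N (\<lambda>i j. Max ((\<lambda>t. f t i j) ` T))"
    proof (intro ballI up_mono)
      fix e i j assume "e \<in> PiE {1..N} (\<lambda>_. T)" "i \<in> {1..N}" "j \<in> {1..N}"
      then have "e j \<in> T" by auto
      then show "f (e j) i j \<le> Max ((\<lambda>t. f t i j) ` T)" using T by (intro Max_ge) auto
    qed
    then show ?thesis using fin ne by simp
  qed
qed



lemma eta_l: "eta r c \<delta> \<epsilon> i (l+1) m x = max (eta r c \<delta> \<epsilon> i l m x) (eta r c \<delta> \<epsilon> i l m (x+1) - \<delta>)"
  by (simp add: eta_def max_def algebra_simps)
lemma eta'_l: "eta' r c' \<delta> \<epsilon> i (l+1) m x = max (eta' r c' \<delta> \<epsilon> i l m x) (eta' r c' \<delta> \<epsilon> i l m (x+1) - \<delta>)"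
  by (simp add: eta'_def max_def algebra_simps)
lemma eta_m: "eta r c \<delta> \<epsilon> i l (m-1) x = max (eta r c \<delta> \<epsilon> i l m x) (eta r c \<delta> \<epsilon> i l m (x-1) - \<epsilon>)"
  by (simp add: eta_def max_def algebra_simps)
lemma eta'_m: "eta' r c' \<delta> \<epsilon> i l (m-1) x = max (eta' r c' \<delta> \<epsilon> i l m x) (eta' r c' \<delta> \<epsilon> i l m (x-1) - \<epsilon>)"
  by (simp add: eta'_def max_def algebra_simps)

lemma phi_l: "phi r c c' \<delta> \<epsilon> i (l+1) m x = max (phi r c c' \<delta> \<epsilon> i l m x) (phi r c c' \<delta> \<epsilon> i l m (x+1) - \<delta>)"
  unfolding phi_def eta_l eta'_l by (simp add: max_def)
lemma phi_m: "phi r c c' \<delta> \<epsilon> i l (m-1) x = max (phi r c c' \<delta> \<epsilon> i l m x) (phi r c c' \<delta> \<epsilon> i l m (x-1) - \<epsilon>)"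
  unfolding phi_def eta_m eta'_m by (simp add: max_def)

lemma phi_convex:
  assumes "y = x - 1" "z = x + 1"
  shows "2 * phi r c c' \<delta> \<epsilon> i l m x \<le> phi r c c' \<delta> \<epsilon> i l m y + phi r c c' \<delta> \<epsilon> i l m z"
proof -
  have 1: "eta r c \<delta> \<epsilon> i l m y + eta r c \<delta> \<epsilon> i l m z = 2 * eta r c \<delta> \<epsilon> i l m x"
    unfolding assms eta_def by (simp add: algebra_simps)
  have 2: "eta' r c' \<delta> \<epsilon> i l m y + eta' r c' \<delta> \<epsilon> i l m z = 2 * eta' r c' \<delta> \<epsilon> i l m x"
    unfolding assms eta'_def by (simp add: algebra_simps)
  show ?thesis unfolding phi_def using 1 2 by (simp add: max_def)
qed

lemma phi_convex2:
  assumes "y = x + 1" "z = x - 1"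
  shows "2 * phi r c c' \<delta> \<epsilon> i l m x \<le> phi r c c' \<delta> \<epsilon> i l m y + phi r c c' \<delta> \<epsilon> i l m z"
  using phi_convex[OF assms(2,1), of r c c' \<delta> \<epsilon> i l m] by linarith

lemma sum_upd2:
  fixes g :: "'a \<Rightarrow> 'b \<Rightarrow> 'c::ab_group_add"
  assumes "finite A" "j \<in> A" "k \<in> A" "j \<noteq> k"
  shows "sum (\<lambda>i. g i ((e(j:=x, k:=y)) i)) A = sum (\<lambda>i. g i (e i)) A + g j x + g k y - g j (e j) - g k (e k)"
proof -
  have r: "sum h A = h j + h k + sum h (A - {j} - {k})" for h :: "'a \<Rightarrow> 'c"
    using assms by (simp add: sum.remove[of A j] sum.remove[of "A - {j}" k] algebra_simps)
  have "sum (\<lambda>i. g i ((e(j:=x, k:=y)) i)) (A - {j} - {k}) = sum (\<lambda>i. g i (e i)) (A - {j} - {k})"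
    by (rule sum.cong) auto
  moreover have "sum (\<lambda>i. g i ((e(j:=x, k:=y)) i)) A = g j x + g k y + sum (\<lambda>i. g i ((e(j:=x, k:=y)) i)) (A - {j} - {k})"
    using r[of "\<lambda>i. g i ((e(j:=x, k:=y)) i)"] assms(4) by simp
  moreover have "sum (\<lambda>i. g i (e i)) A = g j (e j) + g k (e k) + sum (\<lambda>i. g i (e i)) (A - {j} - {k})"
    using r[of "\<lambda>i. g i (e i)"] by simp
  ultimately show ?thesis by (simp add: algebra_simps)
qed

lemma downclosed:
  assumes "S \<subseteq> {1..(N::nat)}" "\<forall>k\<in>S. \<forall>i. 1 \<le> i \<longrightarrow> i \<le> k \<longrightarrow> i \<in> S"
  shows "S = {1..card S}"
proof (cases "S = {}")
  case False
  have f: "finite S" using assms(1) finite_subset by blast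
  have "S = {1..Max S}"
  proof
    show "S \<subseteq> {1..Max S}" using f assms(1) by auto
    show "{1..Max S} \<subseteq> S" using assms(2) Max_in[OF f False] by auto
  qed
  then show ?thesis by (metis card_atLeastAtMost diff_Suc_1)
qed simp

lemma upclosed:
  assumes "S \<subseteq> {1..(N::nat)}" "\<forall>k\<in>S. \<forall>i. k \<le> i \<longrightarrow> i \<le> N \<longrightarrow> i \<in> S"
  shows "S = {N + 1 - card S..N}"
proof (cases "S = {}")
  case False
  have f: "finite S" using assms(1) finite_subset by blast
  have mi: "Min S \<in> S" using Min_in[OF f False] .
  have "S = {Min S..N}"
  proof
    show "S \<subseteq> {Min S..N}" using f assms(1) by auto
    show "{Min S..N} \<subseteq> S" using assms(2) mi by auto
  qed
  moreover have "Min S \<le> N" "1 \<le> Min S" using mi assms(1) by auto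
  ultimately show ?thesis by (metis Suc_eq_plus1 card_atLeastAtMost diff_diff_cancel le_SucI)
qed simp

context
  fixes N :: nat and r c c' :: "nat \<Rightarrow> real" and \<delta> \<epsilon> :: real and l m n :: int
begin

definition G :: "(nat \<Rightarrow> int) \<Rightarrow> real" where
  "G e = up N (\<lambda>i j. phi r c c' \<delta> \<epsilon> i l m (n + int j - 1 + e j))"
definition eAB :: "nat \<Rightarrow> nat \<Rightarrow> nat \<Rightarrow> int" where
  "eAB a b j = (if j \<le> a then -1 else if N - b < j then 1 else 0)"
definition cost :: "(int \<Rightarrow> real) \<Rightarrow> (nat \<Rightarrow> int) \<Rightarrow> real" where
  "cost w e = (\<Sum>j=1..N. w (e j))"
definition pot :: "(nat \<Rightarrow> int) \<Rightarrow> int" where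
  "pot e = (\<Sum>j=1..N. e j * int j)"

lemma G_cong: "(\<And>j. j \<in> {1..N} \<Longrightarrow> e j = e' j) \<Longrightarrow> G e = G e'"
  unfolding G_def by (intro up_cong) auto
lemma cost_cong: "(\<And>j. j \<in> {1..N} \<Longrightarrow> e j = e' j) \<Longrightarrow> cost w e = cost w e'"
  unfolding cost_def by (intro sum.cong) auto

lemma step:
  assumes vals: "\<forall>k\<in>{1..N}. e k \<in> {-1,0,1}" and j: "1 \<le> j" "j < N" and dec: "e (Suc j) < e j"
  shows "\<exists>e'. (\<forall>k\<in>{1..N}. e' k \<in> {-1,0,1}) \<and> G e \<le> G e' \<and> pot e' = pot e + 1
     \<and> (\<forall>w. 2 * w 0 \<le> w (-1) + w 1 \<longrightarrow> cost w e' \<le> cost w e)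
     \<and> ((\<forall>k\<in>{1..N}. e k \<noteq> -1) \<longrightarrow> (\<forall>k\<in>{1..N}. e' k \<noteq> -1))
     \<and> ((\<forall>k\<in>{1..N}. e k \<noteq> 1) \<longrightarrow> (\<forall>k\<in>{1..N}. e' k \<noteq> 1))"
proof -
  have jN: "j \<in> {1..N}" "Suc j \<in> {1..N}" using j by auto
  have ej: "e j \<in> {-1,0,1}" "e (Suc j) \<in> {-1,0,1}" using vals jN by auto
  have tp: "transpose j (Suc j) permutes {1..N}" using jN by (intro permutes_swap_id)
  have potu: "pot (e(j:=x, Suc j:=y)) = pot e + x * int j + y * int (Suc j) - e j * int j - e (Suc j) * int (Suc j)" for x y
    unfolding pot_def using sum_upd2[of "{1..N}" j "Suc j" "\<lambda>i v. v * int i" e x y] jN by simp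
  have costu: "cost w (e(j:=x, Suc j:=y)) = cost w e + w x + w y - w (e j) - w (e (Suc j))" for w x y
    unfolding cost_def using sum_upd2[of "{1..N}" j "Suc j" "\<lambda>i v. w v" e x y] jN by simp
  consider "e j = 1" "e (Suc j) = 0" | "e j = 0" "e (Suc j) = -1" | "e j = 1" "e (Suc j) = -1"
    using ej dec by auto
  then show ?thesis
  proof cases
    case 1
    let ?e = "e(j:=0, Suc j:=1)"
    have "G e \<le> G ?e" unfolding G_def
    proof (rule up_exch[OF tp])
      fix i k assume k: "k \<in> {1..N}"
      show "2 * phi r c c' \<delta> \<epsilon> i l m (n + int k - 1 + e k) \<le>
        phi r c c' \<delta> \<epsilon> i l m (n + int k - 1 + ?e k) + phi r c c' \<delta> \<epsilon> i l m (n + int (transpose j (Suc j) k) - 1 + ?e (transpose j (Suc j) k))"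
      proof (cases "k = j \<or> k = Suc j")
        case True
        have a: "2 * phi r c c' \<delta> \<epsilon> i l m (n + int j) \<le> phi r c c' \<delta> \<epsilon> i l m (n + int j - 1) + phi r c c' \<delta> \<epsilon> i l m (n + int j + 1)"
          by (rule phi_convex) simp_all
        show ?thesis using True a by (auto simp: 1 transpose_def add.commute)
      next
        case False then show ?thesis by (simp add: transpose_def)
      qed
    qed
    then show ?thesis using vals 1 jN by (intro exI[of _ ?e]) (auto simp: potu costu)
  next
    case 2
    let ?e = "e(j:=-1, Suc j:=0)"
    have "G e \<le> G ?e" unfolding G_def
    proof (rule up_exch[OF tp])
      fix i k assume k: "k \<in> {1..N}"
      show "2 * phi r c c' \<delta> \<epsilon> i l m (n + int k - 1 + e k) \<le>
        phi r c c' \<delta> \<epsilon> i l m (n + int k - 1 + ?e k) + phi r c c' \<delta> \<epsilon> i l m (n + int (transpose j (Suc j) k) - 1 + ?e (transpose j (Suc j) k))"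
      proof (cases "k = j \<or> k = Suc j")
        case True
        have a: "2 * phi r c c' \<delta> \<epsilon> i l m (n + int j - 1) \<le> phi r c c' \<delta> \<epsilon> i l m (n + int j - 2) + phi r c c' \<delta> \<epsilon> i l m (n + int j)"
          by (rule phi_convex) simp_all
        show ?thesis using True a by (auto simp: 2 transpose_def add.commute)
      next
        case False then show ?thesis by (simp add: transpose_def)
      qed
    qed
    then show ?thesis using vals 2 jN by (intro exI[of _ ?e]) (auto simp: potu costu)
  next
    case 3
    let ?e = "e(j:=0, Suc j:=0)"
    have "G e \<le> G ?e" unfolding G_def
    proof (rule up_perm_le[OF tp])
      fix i k assume k: "k \<in> {1..N}"
      show "phi r c c' \<delta> \<epsilon> i l m (n + int k - 1 + e k) \<le>
        phi r c c' \<delta> \<epsilon> i l m (n + int (transpose j (Suc j) k) - 1 + ?e (transpose j (Suc j) k))"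
        by (cases "k = j \<or> k = Suc j") (auto simp: 3 transpose_def)
    qed
    then show ?thesis using vals 3 jN by (intro exI[of _ ?e]) (auto simp: potu costu)
  qed
qed


lemma chain:
  assumes mono: "\<forall>j. 1 \<le> j \<longrightarrow> j < N \<longrightarrow> e j \<le> e (Suc j)" and "1 \<le> i" "i \<le> k" "k \<le> N"
  shows "e i \<le> (e k :: int)"
  using assms(3,4)
proof (induction k rule: dec_induct)
  case (step k)
  then have "e k \<le> e (Suc k)" using mono assms(2) by auto
  with step show ?case by simp
qed simp

lemma base:
  assumes vals: "\<forall>k\<in>{1..N}. e k \<in> {-1,0,1}" and mono: "\<forall>j. 1 \<le> j \<longrightarrow> j < N \<longrightarrow> e j \<le> e (Suc j)"
  shows "\<exists>a b. a + b \<le> N \<and> (\<forall>k\<in>{1..N}. e k = eAB a b k)"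
proof -
  define D where "D = {k\<in>{1..N}. e k = -1}"
  define U where "U = {k\<in>{1..N}. e k = 1}"
  have D: "D = {1..card D}"
  proof (rule downclosed[of D N])
    show "D \<subseteq> {1..N}" unfolding D_def by auto
    show "\<forall>k\<in>D. \<forall>i. 1 \<le> i \<longrightarrow> i \<le> k \<longrightarrow> i \<in> D"
    proof (intro ballI allI impI)
      fix k i assume k: "k \<in> D" and i: "1 \<le> i" "i \<le> k"
      then have "e i \<le> e k" using chain[OF mono i] unfolding D_def by auto
      then show "i \<in> D" using k i vals unfolding D_def by force
    qed
  qed
  have U: "U = {N + 1 - card U..N}"
  proof (rule upclosed[of U N])
    show "U \<subseteq> {1..N}" unfolding U_def by auto
    show "\<forall>k\<in>U. \<forall>i. k \<le> i \<longrightarrow> i \<le> N \<longrightarrow> i \<in> U"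
    proof (intro ballI allI impI)
      fix k i assume k: "k \<in> U" and i: "k \<le> i" "i \<le> N"
      then have "e k \<le> e i" using chain[OF mono _ i] unfolding U_def by auto
      then show "i \<in> U" using k i vals unfolding U_def by force
    qed
  qed
  have "card D + card U = card (D \<union> U)"
    by (rule card_Un_disjoint[symmetric]) (auto simp: D_def U_def)
  also have "\<dots> \<le> card {1..N}" by (rule card_mono) (auto simp: D_def U_def)
  finally have ab: "card D + card U \<le> N" by simp
  have "e k = eAB (card D) (card U) k" if k: "k \<in> {1..N}" for k
  proof -
    have kD: "k \<in> D \<longleftrightarrow> k \<le> card D" using k D by (metis atLeastAtMost_iff)
    have "k \<in> U \<longleftrightarrow> k \<in> {N + 1 - card U..N}" using U by simp
    then have kU: "k \<in> U \<longleftrightarrow> N - card U < k" using k ab by auto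
    show ?thesis using kD kU k vals unfolding eAB_def D_def U_def by auto
  qed
  with ab show ?thesis by blast
qed

lemma eAB_vals: "eAB a b k \<in> {-1,0,1}"
  unfolding eAB_def by auto

lemma sign_a: "a + b \<le> N \<Longrightarrow> (\<forall>k\<in>{1..N}. e k = eAB a b k) \<Longrightarrow> (\<forall>k\<in>{1..N}. e k \<noteq> -1) \<Longrightarrow> a = 0"
proof (rule ccontr)
  assume h: "a + b \<le> N" "\<forall>k\<in>{1..N}. e k = eAB a b k" "\<forall>k\<in>{1..N}. e k \<noteq> -1" "a \<noteq> 0"
  then have "1 \<in> {1..N}" "eAB a b 1 = -1" unfolding eAB_def by auto
  with h show False by auto
qed

lemma sign_b: "a + b \<le> N \<Longrightarrow> (\<forall>k\<in>{1..N}. e k = eAB a b k) \<Longrightarrow> (\<forall>k\<in>{1..N}. e k \<noteq> 1) \<Longrightarrow> b = 0"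
proof (rule ccontr)
  assume h: "a + b \<le> N" "\<forall>k\<in>{1..N}. e k = eAB a b k" "\<forall>k\<in>{1..N}. e k \<noteq> 1" "b \<noteq> 0"
  then have "N \<in> {1..N}" "eAB a b N = 1" unfolding eAB_def by auto
  with h show False by auto
qed

lemma normalize:
  assumes "\<forall>j\<in>{1..N}. e j \<in> {-1,0,1}"
  shows "\<exists>a b. a + b \<le> N \<and> G e \<le> G (eAB a b)
     \<and> (\<forall>w. 2 * w 0 \<le> w (-1) + w 1 \<longrightarrow> cost w (eAB a b) \<le> cost w e)
     \<and> ((\<forall>j\<in>{1..N}. e j \<noteq> -1) \<longrightarrow> a = 0) \<and> ((\<forall>j\<in>{1..N}. e j \<noteq> 1) \<longrightarrow> b = 0)"
proof -
  define B where "B = (\<Sum>j=1..N. int j)"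
  have potB: "pot e \<le> B" if "\<forall>j\<in>{1..N}. e j \<in> {-1,0,1}" for e
    unfolding pot_def B_def
  proof (intro sum_mono)
    fix j assume j: "j \<in> {1..N}"
    then have "e j \<in> {-1,0,1}" using that by blast
    then have "e j \<le> 1" by auto
    then show "e j * int j \<le> int j" using mult_right_mono[of "e j" 1 "int j"] by simp
  qed
  show ?thesis using assms
  proof (induction "nat (B - pot e)" arbitrary: e rule: less_induct)
    case less
    show ?case
    proof (cases "\<forall>j. 1 \<le> j \<longrightarrow> j < N \<longrightarrow> e j \<le> e (Suc j)")
      case True
      obtain a b where ab: "a + b \<le> N" "\<forall>k\<in>{1..N}. e k = eAB a b k" using base[OF less.prems True] by blast
      have "G e = G (eAB a b)" using ab(2) by (intro G_cong) auto
      moreover have "cost w e = cost w (eAB a b)" for w using ab(2) by (intro cost_cong) auto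
      ultimately show ?thesis
      proof (intro exI conjI)
        show "a + b \<le> N" by (fact ab(1))
        show "G e \<le> G (eAB a b)" using \<open>G e = G (eAB a b)\<close> by simp
        show "\<forall>w. 2 * w 0 \<le> w (-1) + w 1 \<longrightarrow> cost w (eAB a b) \<le> cost w e"
          using \<open>\<And>w. cost w e = cost w (eAB a b)\<close> by simp
        show "(\<forall>j\<in>{1..N}. e j \<noteq> -1) \<longrightarrow> a = 0" using sign_a[OF ab] by blast
        show "(\<forall>j\<in>{1..N}. e j \<noteq> 1) \<longrightarrow> b = 0" using sign_b[OF ab] by blast
      qed
    next
      case False
      then obtain j where j: "1 \<le> j" "j < N" "e (Suc j) < e j" by auto
      obtain e' where e': "\<forall>k\<in>{1..N}. e' k \<in> {-1,0,1}" "G e \<le> G e'" "pot e' = pot e + 1"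
        "\<forall>w. 2 * w 0 \<le> w (-1) + w 1 \<longrightarrow> cost w e' \<le> cost w e"
        "(\<forall>k\<in>{1..N}. e k \<noteq> -1) \<longrightarrow> (\<forall>k\<in>{1..N}. e' k \<noteq> -1)"
        "(\<forall>k\<in>{1..N}. e k \<noteq> 1) \<longrightarrow> (\<forall>k\<in>{1..N}. e' k \<noteq> 1)"
        using step[OF less.prems j] by blast
      have "nat (B - pot e') < nat (B - pot e)" using e'(3) potB[OF e'(1)] by simp
      from less.hyps[OF this e'(1)] obtain a b where
        ab: "a + b \<le> N" "G e' \<le> G (eAB a b)"
        "\<forall>w. 2 * w 0 \<le> w (-1) + w 1 \<longrightarrow> cost w (eAB a b) \<le> cost w e'"
        "(\<forall>j\<in>{1..N}. e' j \<noteq> -1) \<longrightarrow> a = 0" "(\<forall>j\<in>{1..N}. e' j \<noteq> 1) \<longrightarrow> b = 0" by blast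
      show ?thesis
      proof (intro exI conjI)
        show "a + b \<le> N" by (fact ab(1))
        show "G e \<le> G (eAB a b)" using e'(2) ab(2) by linarith
        show "\<forall>w. 2 * w 0 \<le> w (-1) + w 1 \<longrightarrow> cost w (eAB a b) \<le> cost w e"
        proof (intro allI impI)
          fix w :: "int \<Rightarrow> real" assume "2 * w 0 \<le> w (-1) + w 1"
          then have "cost w (eAB a b) \<le> cost w e'" "cost w e' \<le> cost w e" using ab(3) e'(4) by auto
          then show "cost w (eAB a b) \<le> cost w e" by linarith
        qed
        show "(\<forall>j\<in>{1..N}. e j \<noteq> -1) \<longrightarrow> a = 0" using ab(4) e'(5) by blast
        show "(\<forall>j\<in>{1..N}. e j \<noteq> 1) \<longrightarrow> b = 0" using ab(5) e'(6) by blast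
      qed
    qed
  qed
qed

end


lemma img_dec: "(\<lambda>i::nat. A - int i) ` {0..k} = {A - int k..(A::int)}"
proof (rule set_eqI, rule iffI)
  fix x assume "x \<in> {A - int k..A}"
  then show "x \<in> (\<lambda>i::nat. A - int i) ` {0..k}" by (intro image_eqI[of _ _ "nat (A - x)"]) auto
qed auto

lemma img_inc: "(\<lambda>i::nat. int i + B) ` {0..k} = {B..(B::int) + int k}"
proof (rule set_eqI, rule iffI)
  fix x assume "x \<in> {B..B + int k}"
  then show "x \<in> (\<lambda>i::nat. int i + B) ` {0..k}" by (intro image_eqI[of _ _ "nat (x - B)"]) auto
qed auto

lemma Max_ins: "lo \<le> h \<Longrightarrow> Max (F ` {lo..h+1}) = max (F (h+1)) (Max (F ` {lo..(h::int)}))"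
proof -
  assume "lo \<le> h"
  then have "{lo..h+1} = insert (h+1) {lo..h}" by auto
  moreover have "{lo..h} \<noteq> {}" using \<open>lo \<le> h\<close> by simp
  ultimately show ?thesis by (simp add: Max_insert)
qed

context
  fixes N :: nat and r c c' :: "nat \<Rightarrow> real" and \<delta> \<epsilon> :: real and l m n :: int
begin

abbreviation "tc \<equiv> tauc N r c c' \<delta> \<epsilon> l m n"
abbreviation "GG \<equiv> G N r c c' \<delta> \<epsilon> l m n"

lemma eAB_mono: "x \<le> y \<Longrightarrow> eAB N a b x \<le> eAB N a b y"
  unfolding eAB_def by auto

lemma eAB_set:
  assumes ab: "a + b \<le> N"
  shows "(\<lambda>j. int j - 1 + eAB N a b j) ` {1..N} = {-1..int N} - {int a - 1, int N - int b}"
proof (rule set_eqI, rule iffI)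
  fix x assume "x \<in> (\<lambda>j. int j - 1 + eAB N a b j) ` {1..N}"
  then obtain j where j: "j \<in> {1..N}" "x = int j - 1 + eAB N a b j" by auto
  then show "x \<in> {-1..int N} - {int a - 1, int N - int b}" using ab unfolding eAB_def by (auto split: if_splits)
next
  fix x assume x: "x \<in> {-1..int N} - {int a - 1, int N - int b}"
  consider "x < int a - 1" | "int a - 1 < x \<and> x < int N - int b" | "int N - int b < x" using x by force
  then show "x \<in> (\<lambda>j. int j - 1 + eAB N a b j) ` {1..N}"
  proof cases
    case 1 then show ?thesis using x ab unfolding eAB_def by (intro image_eqI[of _ _ "nat (x + 2)"]) auto
  next
    case 2 then show ?thesis using x ab unfolding eAB_def by (intro image_eqI[of _ _ "nat (x + 1)"]) auto
  next
    case 3 then show ?thesis using x ab unfolding eAB_def by (intro image_eqI[of _ _ "nat x"]) auto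
  qed
qed

lemma sl:
  assumes ab: "a + b \<le> N"
  shows "sorted_list_of_set ({-1..int N} - {int a - 1, int N - int b}) = map (\<lambda>j. int j - 1 + eAB N a b j) [1..<N+1]"
proof (rule sorted_distinct_set_unique)
  have "sorted_wrt (<) (map (\<lambda>j. int j - 1 + eAB N a b j) [1..<N+1])"
    unfolding sorted_wrt_map
  proof (rule sorted_wrt_mono_rel[OF _ sorted_wrt_upt])
    fix x y :: nat assume "x < y"
    then show "int x - 1 + eAB N a b x < int y - 1 + eAB N a b y" using eAB_mono[of x y a b] by simp
  qed
  then show "sorted (map (\<lambda>j. int j - 1 + eAB N a b j) [1..<N+1])" "distinct (map (\<lambda>j. int j - 1 + eAB N a b j) [1..<N+1])"
    by (simp_all add: strict_sorted_iff)
  show "set (sorted_list_of_set ({-1..int N} - {int a - 1, int N - int b})) = set (map (\<lambda>j. int j - 1 + eAB N a b j) [1..<N+1])"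
  proof -
    have "set [1..<N+1] = {1..N}" by auto
    then show ?thesis using eAB_set[OF ab] by (simp only: set_map set_sorted_list_of_set finite_Diff finite_atLeastAtMost_int)
  qed
qed auto

lemma tc_eq:
  assumes ab: "a + b \<le> N"
  shows "tc (int a - 1) (int N - int b) = GG (eAB N a b)"
  unfolding tauc_def G_def
proof (rule up_cong)
  fix i k assume k: "k \<in> {1..N}"
  have h: "sorted_list_of_set ({-1..int N} - {int a - 1, int N - int b}) ! (k - 1) = int k - 1 + eAB N a b k"
  proof -
    have "k - 1 < length [1..<N+1]" using k by auto
    then have "map (\<lambda>j. int j - 1 + eAB N a b j) [1..<N+1] ! (k - 1) = int ([1..<N+1] ! (k - 1)) - 1 + eAB N a b ([1..<N+1] ! (k - 1))"
      by (rule nth_map)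
    moreover have "[1..<N+1] ! (k - 1) = k" using k by (subst nth_upt) auto
    ultimately show ?thesis by (simp only: sl[OF ab])
  qed
  show "phi r c c' \<delta> \<epsilon> i l m (n + sorted_list_of_set ({-1..int N} - {int a - 1, int N - int b}) ! (k - 1)) =
     phi r c c' \<delta> \<epsilon> i l m (n + int k - 1 + eAB N a b k)" unfolding h by (simp add: algebra_simps)
qed

lemma cost_eAB:
  assumes ab: "a + b \<le> N"
  shows "cost N w (eAB N a b) = real a * w (-1) + real (N - a - b) * w 0 + real b * w 1"
proof -
  have U: "{1..N} = {1..a} \<union> ({a<..N-b} \<union> {N-b<..N})" using ab by auto
  have "cost N w (eAB N a b) = sum (\<lambda>j. w (eAB N a b j)) {1..a} + (sum (\<lambda>j. w (eAB N a b j)) {a<..N-b} + sum (\<lambda>j. w (eAB N a b j)) {N-b<..N})"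
    unfolding cost_def U using ab by (subst sum.union_disjoint, auto, subst sum.union_disjoint, auto)
  also have "sum (\<lambda>j. w (eAB N a b j)) {1..a} = sum (\<lambda>j. w (-1)) {1..a}"
    by (rule sum.cong) (auto simp: eAB_def)
  also have "sum (\<lambda>j. w (eAB N a b j)) {a<..N-b} = sum (\<lambda>j. w 0) {a<..N-b}"
    by (rule sum.cong) (auto simp: eAB_def)
  also have "sum (\<lambda>j. w (eAB N a b j)) {N-b<..N} = sum (\<lambda>j. w 1) {N-b<..N}"
    using ab by (intro sum.cong) (auto simp: eAB_def)
  finally show ?thesis using ab by (simp add: algebra_simps)
qed

end


context
  fixes N :: nat and r c c' :: "nat \<Rightarrow> real" and \<delta> \<epsilon> :: real and l m n :: int
begin

lemma Psi_eq:
  assumes k: "k1 \<le> N" "k2 \<le> N"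
  shows "Psi N r c c' \<delta> \<epsilon> l m n k1 k2 =
    Max ((\<lambda>\<alpha>. tauc N r c c' \<delta> \<epsilon> l m n \<alpha> (int N - 1 - int k1 + int k2 - \<alpha>)) `
      {max (-1) (int k2 - int k1 - 1)..min (int k2 - 1) (int N - int k1 - 1)})"
    (is "_ = Max (?F ` {?lo..?hi})")
proof -
  let ?tc = "tauc N r c c' \<delta> \<epsilon> l m n"
  have e1: "(\<lambda>i::nat. ?tc (int k2 - int i - 1) (int N - int k1 + int i)) ` {0..K} = ?F ` ((\<lambda>i::nat. (int k2 - 1) - int i) ` {0..K})" for K
    unfolding image_image by (rule image_cong) (simp_all add: algebra_simps)
  have e3: "(\<lambda>i::nat. ?tc (int i - 1) (int N - int k1 + int k2 - int i)) ` {0..K} = ?F ` ((\<lambda>i::nat. int i + (-1)) ` {0..K})" for K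
    unfolding image_image by (rule image_cong) (simp_all add: algebra_simps)
  have e4: "(\<lambda>i::nat. ?tc (int N - int k1 - int i - 1) (int k2 + int i)) ` {0..K} = ?F ` ((\<lambda>i::nat. (int N - int k1 - 1) - int i) ` {0..K})" for K
    unfolding image_image by (rule image_cong) (simp_all add: algebra_simps)
  show ?thesis
  proof (cases "int k1 \<ge> int k2 \<and> int N - int k1 \<ge> int k2")
    case True
    have "{int k2 - 1 - int k2..int k2 - 1} = {?lo..?hi}" using True by (simp add: max_def min_def)
    then show ?thesis using True unfolding Psi_def Let_def by (simp only: if_True e1 img_dec) simp
  next
    case F1: False
    show ?thesis
    proof (cases "int N - int k1 \<ge> int k2 \<and> int k2 \<ge> int k1")
      case True
      have "{int k2 - 1 - int k1..int k2 - 1} = {?lo..?hi}" using True by (simp add: max_def min_def)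
      then show ?thesis using F1 True unfolding Psi_def Let_def by (simp only: if_True if_False e1 img_dec) simp
    next
      case F2: False
      show ?thesis
      proof (cases "int k1 \<ge> int k2 \<and> int k2 \<ge> int N - int k1")
        case True
        have "{-1..-1 + int (N - k1)} = {?lo..?hi}" using True k by (simp add: max_def min_def of_nat_diff)
        then show ?thesis using F1 F2 True unfolding Psi_def Let_def by (simp only: if_True if_False e3 img_inc) simp
      next
        case F3: False
        have cc: "int k2 > int k1" "int k2 > int N - int k1" using F1 F2 F3 by linarith+
        have "?lo = int k2 - int k1 - 1" "?hi = int N - int k1 - 1" using cc by simp_all
        moreover have "int N - int k1 - 1 - int (N - k2) = int k2 - int k1 - 1" using k by (simp add: of_nat_diff)
        ultimately have "{int N - int k1 - 1 - int (N - k2)..int N - int k1 - 1} = {?lo..?hi}" by simp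
        then show ?thesis using F1 F2 F3 unfolding Psi_def Let_def by (simp only: if_True if_False e4 img_dec)
      qed
    qed
  qed
qed

lemma expand_le:
  assumes T: "T \<subseteq> {-1,0,1}" "0 \<in> T" and w: "2 * w 0 \<le> w (-1) + w 1"
    and h: "\<And>a b. a + b \<le> N \<Longrightarrow> (-1 \<notin> T \<Longrightarrow> a = 0) \<Longrightarrow> (1 \<notin> T \<Longrightarrow> b = 0) \<Longrightarrow>
       G N r c c' \<delta> \<epsilon> l m n (eAB N a b) - cost N w (eAB N a b) \<le> M"
  shows "Max ((\<lambda>e. G N r c c' \<delta> \<epsilon> l m n e - cost N w e) ` PiE {1..N} (\<lambda>_. T)) \<le> M"
proof -
  have fT: "finite T" using T(1) finite_subset by blast
  have fin: "finite (PiE {1..N} (\<lambda>_. T))" using fT by (simp add: finite_PiE)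
  have ne: "PiE {1..N} (\<lambda>_. T) \<noteq> {}" using T(2) by (auto simp: PiE_eq_empty_iff)
  have "G N r c c' \<delta> \<epsilon> l m n e - cost N w e \<le> M" if e: "e \<in> PiE {1..N} (\<lambda>_. T)" for e
  proof -
    have vals: "\<forall>j\<in>{1..N}. e j \<in> {-1,0,1}" using e T(1) by auto
    obtain a b where ab: "a + b \<le> N" "G N r c c' \<delta> \<epsilon> l m n e \<le> G N r c c' \<delta> \<epsilon> l m n (eAB N a b)"
      "\<forall>w. 2 * w 0 \<le> w (-1) + w 1 \<longrightarrow> cost N w (eAB N a b) \<le> cost N w e"
      "(\<forall>j\<in>{1..N}. e j \<noteq> -1) \<longrightarrow> a = 0" "(\<forall>j\<in>{1..N}. e j \<noteq> 1) \<longrightarrow> b = 0"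
      using normalize[OF vals] by blast
    have "-1 \<notin> T \<Longrightarrow> a = 0"
    proof -
      assume "-1 \<notin> T"
      then have "\<forall>j\<in>{1..N}. e j \<noteq> -1" using e by (metis PiE_mem)
      then show "a = 0" using ab(4) by blast
    qed
    moreover have "1 \<notin> T \<Longrightarrow> b = 0"
    proof -
      assume "1 \<notin> T"
      then have "\<forall>j\<in>{1..N}. e j \<noteq> 1" using e by (metis PiE_mem)
      then show "b = 0" using ab(5) by blast
    qed
    ultimately have "G N r c c' \<delta> \<epsilon> l m n (eAB N a b) - cost N w (eAB N a b) \<le> M" using h ab(1) by blast
    moreover have "cost N w (eAB N a b) \<le> cost N w e" using ab(3) w by blast
    ultimately show ?thesis using ab(2) by linarith
  qed
  then show ?thesis using fin ne by simp
qed

lemma expand_ge: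
  assumes "\<forall>j\<in>{1..N}. eAB N a b j \<in> T" "finite T"
  shows "G N r c c' \<delta> \<epsilon> l m n (eAB N a b) - cost N w (eAB N a b) \<le> Max ((\<lambda>e. G N r c c' \<delta> \<epsilon> l m n e - cost N w e) ` PiE {1..N} (\<lambda>_. T))"
proof -
  let ?e = "restrict (eAB N a b) {1..N}"
  have "?e \<in> PiE {1..N} (\<lambda>_. T)" using assms(1) by auto
  moreover have "G N r c c' \<delta> \<epsilon> l m n ?e = G N r c c' \<delta> \<epsilon> l m n (eAB N a b)" by (rule G_cong) auto
  moreover have "cost N w ?e = cost N w (eAB N a b)" by (rule cost_cong) auto
  moreover have "finite (PiE {1..N} (\<lambda>_. T))" using assms(2) by (simp add: finite_PiE)
  ultimately show ?thesis by (metis (no_types, lifting) Max_ge finite_imageI image_eqI)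
qed

lemma tau_expand:
  assumes T: "finite T" "T \<noteq> {}"
    and col: "\<And>i j. j \<in> {1..N} \<Longrightarrow> X i j = Max ((\<lambda>t. phi r c c' \<delta> \<epsilon> i l m (n + int j - 1 + t) - w t) ` T)"
  shows "up N X = Max ((\<lambda>e. G N r c c' \<delta> \<epsilon> l m n e - cost N w e) ` PiE {1..N} (\<lambda>_. T))"
proof -
  have "up N X = up N (\<lambda>i j. Max ((\<lambda>t. phi r c c' \<delta> \<epsilon> i l m (n + int j - 1 + t) - w t) ` T))"
    by (rule up_cong) (simp add: col)
  also have "\<dots> = Max ((\<lambda>e. up N (\<lambda>i j. phi r c c' \<delta> \<epsilon> i l m (n + int j - 1 + e j) - w (e j))) ` PiE {1..N} (\<lambda>_. T))"
    by (rule up_max_expand[OF T])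
  also have "\<dots> = Max ((\<lambda>e. G N r c c' \<delta> \<epsilon> l m n e - cost N w e) ` PiE {1..N} (\<lambda>_. T))"
    unfolding G_def cost_def by (simp only: up_minus_col)
  finally show ?thesis .
qed

end


context
  fixes N :: nat and r c c' :: "nat \<Rightarrow> real" and \<delta> \<epsilon> :: real and l m n :: int
  assumes dpos: "\<delta> > 0" and epos: "\<epsilon> > 0"
begin

lemma form:
  assumes "a + b \<le> N"
  shows "G N r c c' \<delta> \<epsilon> l m n (eAB N a b) - cost N w (eAB N a b) =
    tauc N r c c' \<delta> \<epsilon> l m n (int a - 1) (int N - int b) - (real a * w (-1) + real (N - a - b) * w 0 + real b * w 1)"
  using tc_eq[OF assms, of r c c' \<delta> \<epsilon> l m n] cost_eAB[OF assms, of w] by simp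

lemma p1: "tau N r c c' \<delta> \<epsilon> (l + 1) m n =
       Max ((\<lambda>k1. tauc N r c c' \<delta> \<epsilon> l m n (-1) (int N - int k1) - real k1 * \<delta>) ` {0..N})"
proof -
  define w where "w = (\<lambda>t::int. if t = 1 then \<delta> else 0)"
  let ?E = "Max ((\<lambda>e. G N r c c' \<delta> \<epsilon> l m n e - cost N w e) ` PiE {1..N} (\<lambda>_. {0,1}))"
  have E: "tau N r c c' \<delta> \<epsilon> (l + 1) m n = ?E"
    unfolding tau_def by (rule tau_expand) (auto simp: phi_l w_def)
  have fk: "G N r c c' \<delta> \<epsilon> l m n (eAB N 0 k) - cost N w (eAB N 0 k) = tauc N r c c' \<delta> \<epsilon> l m n (-1) (int N - int k) - real k * \<delta>"
    if "k \<le> N" for k using form[of 0 k w] that by (simp add: w_def)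
  have fin: "finite ((\<lambda>k1. tauc N r c c' \<delta> \<epsilon> l m n (-1) (int N - int k1) - real k1 * \<delta>) ` {0..N})" by simp
  show ?thesis unfolding E
  proof (rule antisym)
    show "?E \<le> Max ((\<lambda>k1. tauc N r c c' \<delta> \<epsilon> l m n (-1) (int N - int k1) - real k1 * \<delta>) ` {0..N})"
    proof (rule expand_le)
      show "2 * w 0 \<le> w (-1) + w 1" using dpos by (simp add: w_def)
      fix a b assume ab: "a + b \<le> N" "(-1::int) \<notin> {0,1} \<Longrightarrow> a = 0"
      then have a0: "a = 0" by simp
      show "G N r c c' \<delta> \<epsilon> l m n (eAB N a b) - cost N w (eAB N a b) \<le> Max ((\<lambda>k1. tauc N r c c' \<delta> \<epsilon> l m n (-1) (int N - int k1) - real k1 * \<delta>) ` {0..N})"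
      proof -
        have bN: "b \<le> N" using ab a0 by simp
        then have "G N r c c' \<delta> \<epsilon> l m n (eAB N a b) - cost N w (eAB N a b) = tauc N r c c' \<delta> \<epsilon> l m n (-1) (int N - int b) - real b * \<delta>"
          using fk a0 by simp
        also have "\<dots> \<le> Max ((\<lambda>k1. tauc N r c c' \<delta> \<epsilon> l m n (-1) (int N - int k1) - real k1 * \<delta>) ` {0..N})"
          using fin bN by (intro Max_ge) auto
        finally show ?thesis .
      qed
    qed auto
    show "Max ((\<lambda>k1. tauc N r c c' \<delta> \<epsilon> l m n (-1) (int N - int k1) - real k1 * \<delta>) ` {0..N}) \<le> ?E"
    proof (subst Max_le_iff, simp, simp, intro ballI)
      fix x assume "x \<in> (\<lambda>k1. tauc N r c c' \<delta> \<epsilon> l m n (-1) (int N - int k1) - real k1 * \<delta>) ` {0..N}"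
      then obtain k where k: "k \<le> N" "x = tauc N r c c' \<delta> \<epsilon> l m n (-1) (int N - int k) - real k * \<delta>" by auto
      show "x \<le> ?E" unfolding k(2) fk[OF k(1), symmetric] by (rule expand_ge) (auto simp: eAB_def)
    qed
  qed
qed


lemma onesided:
  assumes T: "T \<subseteq> {-1,0,1}" "0 \<in> T" and wc: "2 * w 0 \<le> w (-1) + w 1"
    and key: "\<And>a b. a + b \<le> N \<Longrightarrow> (-1 \<notin> T \<Longrightarrow> a = 0) \<Longrightarrow> (1 \<notin> T \<Longrightarrow> b = 0) \<Longrightarrow>
       \<exists>k\<in>{0..N}. G N r c c' \<delta> \<epsilon> l m n (eAB N a b) - cost N w (eAB N a b) \<le> f k"
    and bk: "\<And>k. k \<in> {0..N} \<Longrightarrow> \<exists>a b. a + b \<le> N \<and> (\<forall>j\<in>{1..N}. eAB N a b j \<in> T) \<and>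
       f k \<le> G N r c c' \<delta> \<epsilon> l m n (eAB N a b) - cost N w (eAB N a b)"
  shows "Max ((\<lambda>e. G N r c c' \<delta> \<epsilon> l m n e - cost N w e) ` PiE {1..N} (\<lambda>_. T)) = Max (f ` {0..N})"
proof (rule antisym)
  have fT: "finite T" using T(1) finite_subset by blast
  show "Max ((\<lambda>e. G N r c c' \<delta> \<epsilon> l m n e - cost N w e) ` PiE {1..N} (\<lambda>_. T)) \<le> Max (f ` {0..N})"
  proof (rule expand_le[OF T wc])
    fix a b assume ab: "a + b \<le> N" "-1 \<notin> T \<Longrightarrow> a = 0" "1 \<notin> T \<Longrightarrow> b = 0"
    obtain k where k: "k \<in> {0..N}" "G N r c c' \<delta> \<epsilon> l m n (eAB N a b) - cost N w (eAB N a b) \<le> f k"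
      using key[OF ab] by blast
    moreover have "f k \<le> Max (f ` {0..N})" using k(1) by (intro Max_ge) auto
    ultimately show "G N r c c' \<delta> \<epsilon> l m n (eAB N a b) - cost N w (eAB N a b) \<le> Max (f ` {0..N})" by linarith
  qed
  show "Max (f ` {0..N}) \<le> Max ((\<lambda>e. G N r c c' \<delta> \<epsilon> l m n e - cost N w e) ` PiE {1..N} (\<lambda>_. T))"
  proof (subst Max_le_iff, simp, simp, intro ballI)
    fix x assume "x \<in> f ` {0..N}"
    then obtain k where k: "k \<in> {0..N}" "x = f k" by auto
    obtain a b where ab: "a + b \<le> N" "\<forall>j\<in>{1..N}. eAB N a b j \<in> T"
      "f k \<le> G N r c c' \<delta> \<epsilon> l m n (eAB N a b) - cost N w (eAB N a b)" using bk[OF k(1)] by blast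
    show "x \<le> Max ((\<lambda>e. G N r c c' \<delta> \<epsilon> l m n e - cost N w e) ` PiE {1..N} (\<lambda>_. T))"
      unfolding k(2) using ab(3) expand_ge[OF ab(2) fT, of r c c' \<delta> \<epsilon> l m n w] by linarith
  qed
qed

lemma p2: "tau N r c c' \<delta> \<epsilon> l (m - 1) n =
       Max ((\<lambda>k2. tauc N r c c' \<delta> \<epsilon> l m n (int k2 - 1) (int N) - real k2 * \<epsilon>) ` {0..N})"
proof -
  define w where "w = (\<lambda>t::int. if t = -1 then \<epsilon> else 0)"
  have E: "tau N r c c' \<delta> \<epsilon> l (m - 1) n = Max ((\<lambda>e. G N r c c' \<delta> \<epsilon> l m n e - cost N w e) ` PiE {1..N} (\<lambda>_. {-1,0}))"
    unfolding tau_def by (rule tau_expand) (auto simp: phi_m w_def max.commute)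
  have fk: "G N r c c' \<delta> \<epsilon> l m n (eAB N k 0) - cost N w (eAB N k 0) = tauc N r c c' \<delta> \<epsilon> l m n (int k - 1) (int N) - real k * \<epsilon>"
    if "k \<le> N" for k using form[of k 0 w] that by (simp add: w_def)
  show ?thesis unfolding E
  proof (rule onesided)
    show "2 * w 0 \<le> w (-1) + w 1" using epos by (simp add: w_def)
    fix a b assume ab: "a + b \<le> N" "(1::int) \<notin> {-1,0} \<Longrightarrow> b = 0"
    then show "\<exists>k\<in>{0..N}. G N r c c' \<delta> \<epsilon> l m n (eAB N a b) - cost N w (eAB N a b) \<le> tauc N r c c' \<delta> \<epsilon> l m n (int k - 1) (int N) - real k * \<epsilon>"
      using fk[of a] by (intro bexI[of _ a]) auto
  next
    fix k assume k: "k \<in> {0..N}"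
    then show "\<exists>a b. a + b \<le> N \<and> (\<forall>j\<in>{1..N}. eAB N a b j \<in> {-1,0}) \<and> tauc N r c c' \<delta> \<epsilon> l m n (int k - 1) (int N) - real k * \<epsilon> \<le> G N r c c' \<delta> \<epsilon> l m n (eAB N a b) - cost N w (eAB N a b)"
      using fk[of k] by (intro exI[of _ k] exI[of _ 0]) (auto simp: eAB_def)
  qed auto
qed

lemma p3: "tau N r c c' \<delta> \<epsilon> (l + 1) m (n - 1) =
       Max ((\<lambda>k1. tauc N r c c' \<delta> \<epsilon> l m n (int N - int k1 - 1) (int N) - real k1 * \<delta>) ` {0..N})"
proof -
  define w where "w = (\<lambda>t::int. if t = -1 then 0 else if t = 0 then \<delta> else 2 * \<delta>)"
  have E: "tau N r c c' \<delta> \<epsilon> (l + 1) m (n - 1) = Max ((\<lambda>e. G N r c c' \<delta> \<epsilon> l m n e - cost N w e) ` PiE {1..N} (\<lambda>_. {-1,0}))"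
    unfolding tau_def
  proof (rule tau_expand)
    fix i j
    have "phi r c c' \<delta> \<epsilon> i (l + 1) m (n - 1 + int j - 1) = max (phi r c c' \<delta> \<epsilon> i l m (n - 1 + int j - 1)) (phi r c c' \<delta> \<epsilon> i l m (n - 1 + int j - 1 + 1) - \<delta>)"
      by (rule phi_l)
    then show "phi r c c' \<delta> \<epsilon> i (l + 1) m (n - 1 + int j - 1) = Max ((\<lambda>t. phi r c c' \<delta> \<epsilon> i l m (n + int j - 1 + t) - w t) ` {-1, 0})"
      by (simp add: w_def algebra_simps)
  qed auto
  have fk: "G N r c c' \<delta> \<epsilon> l m n (eAB N (N - k) 0) - cost N w (eAB N (N - k) 0) = tauc N r c c' \<delta> \<epsilon> l m n (int N - int k - 1) (int N) - real k * \<delta>"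
    if "k \<le> N" for k using form[of "N - k" 0 w] that by (simp add: w_def of_nat_diff)
  show ?thesis unfolding E
  proof (rule onesided)
    show "2 * w 0 \<le> w (-1) + w 1" by (simp add: w_def)
    fix a b assume ab: "a + b \<le> N" "(1::int) \<notin> {-1,0} \<Longrightarrow> b = 0"
    then have "N - (N - a) = a" "b = 0" by auto
    then show "\<exists>k\<in>{0..N}. G N r c c' \<delta> \<epsilon> l m n (eAB N a b) - cost N w (eAB N a b) \<le> tauc N r c c' \<delta> \<epsilon> l m n (int N - int k - 1) (int N) - real k * \<delta>"
      using fk[of "N - a"] by (intro bexI[of _ "N - a"]) auto
  next
    fix k assume k: "k \<in> {0..N}"
    then show "\<exists>a b. a + b \<le> N \<and> (\<forall>j\<in>{1..N}. eAB N a b j \<in> {-1,0}) \<and> tauc N r c c' \<delta> \<epsilon> l m n (int N - int k - 1) (int N) - real k * \<delta> \<le> G N r c c' \<delta> \<epsilon> l m n (eAB N a b) - cost N w (eAB N a b)"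
      using fk[of k] by (intro exI[of _ "N - k"] exI[of _ 0]) (auto simp: eAB_def)
  qed auto
qed

lemma p4: "tau N r c c' \<delta> \<epsilon> l (m - 1) (n + 1) =
       Max ((\<lambda>k2. tauc N r c c' \<delta> \<epsilon> l m n (-1) (int k2) - real k2 * \<epsilon>) ` {0..N})"
proof -
  define w where "w = (\<lambda>t::int. if t = 1 then 0 else if t = 0 then \<epsilon> else 2 * \<epsilon>)"
  have E: "tau N r c c' \<delta> \<epsilon> l (m - 1) (n + 1) = Max ((\<lambda>e. G N r c c' \<delta> \<epsilon> l m n e - cost N w e) ` PiE {1..N} (\<lambda>_. {0,1}))"
    unfolding tau_def by (rule tau_expand) (auto simp: phi_m w_def max.commute algebra_simps)
  have fk: "G N r c c' \<delta> \<epsilon> l m n (eAB N 0 (N - k)) - cost N w (eAB N 0 (N - k)) = tauc N r c c' \<delta> \<epsilon> l m n (-1) (int k) - real k * \<epsilon>"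
    if "k \<le> N" for k using form[of 0 "N - k" w] that by (simp add: w_def of_nat_diff)
  show ?thesis unfolding E
  proof (rule onesided)
    show "2 * w 0 \<le> w (-1) + w 1" by (simp add: w_def)
    fix a b assume ab: "a + b \<le> N" "(-1::int) \<notin> {0,1} \<Longrightarrow> a = 0"
    then have "N - (N - b) = b" "a = 0" by auto
    then show "\<exists>k\<in>{0..N}. G N r c c' \<delta> \<epsilon> l m n (eAB N a b) - cost N w (eAB N a b) \<le> tauc N r c c' \<delta> \<epsilon> l m n (-1) (int k) - real k * \<epsilon>"
      using fk[of "N - b"] by (intro bexI[of _ "N - b"]) auto
  next
    fix k assume k: "k \<in> {0..N}"
    then show "\<exists>a b. a + b \<le> N \<and> (\<forall>j\<in>{1..N}. eAB N a b j \<in> {0,1}) \<and> tauc N r c c' \<delta> \<epsilon> l m n (-1) (int k) - real k * \<epsilon> \<le> G N r c c' \<delta> \<epsilon> l m n (eAB N a b) - cost N w (eAB N a b)"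
      using fk[of k] by (intro exI[of _ 0] exI[of _ "N - k"]) (auto simp: eAB_def)
  qed auto
qed

lemma p5: "tau N r c c' \<delta> \<epsilon> l m n = tauc N r c c' \<delta> \<epsilon> l m n (-1) (int N)"
proof -
  have "tauc N r c c' \<delta> \<epsilon> l m n (int 0 - 1) (int N - int 0) = G N r c c' \<delta> \<epsilon> l m n (eAB N 0 0)"
    by (rule tc_eq) simp
  also have "\<dots> = G N r c c' \<delta> \<epsilon> l m n (\<lambda>_. 0)" by (rule G_cong) (auto simp: eAB_def)
  also have "\<dots> = tau N r c c' \<delta> \<epsilon> l m n" by (simp add: G_def tau_def)
  finally show ?thesis by simp
qed


lemma psi_ge:
  assumes ab: "a + b \<le> N"
  shows "tauc N r c c' \<delta> \<epsilon> l m n (int a - 1) (int N - int b) \<le> Psi N r c c' \<delta> \<epsilon> l m n b a"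
proof -
  let ?F = "\<lambda>\<alpha>. tauc N r c c' \<delta> \<epsilon> l m n \<alpha> (int N - 1 - int b + int a - \<alpha>)"
  have "tauc N r c c' \<delta> \<epsilon> l m n (int a - 1) (int N - int b) = ?F (int a - 1)" by simp
  also have "\<dots> \<le> Max (?F ` {max (-1) (int a - int b - 1)..min (int a - 1) (int N - int b - 1)})"
    using ab by (intro Max_ge image_eqI[of _ _ "int a - 1"]) auto
  also have "\<dots> = Psi N r c c' \<delta> \<epsilon> l m n b a" using ab by (intro Psi_eq[symmetric]) auto
  finally show ?thesis .
qed

lemma col6: "phi r c c' \<delta> \<epsilon> i (l + 1) (m - 1) x = Max ((\<lambda>t. phi r c c' \<delta> \<epsilon> i l m (x + t) - (if t = 1 then \<delta> else if t = -1 then \<epsilon> else 0)) ` {-1,0,1})"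
proof -
  have 1: "phi r c c' \<delta> \<epsilon> i (l + 1) (m - 1) x = max (phi r c c' \<delta> \<epsilon> i l (m - 1) x) (phi r c c' \<delta> \<epsilon> i l (m - 1) (x + 1) - \<delta>)"
    by (rule phi_l)
  have 2: "phi r c c' \<delta> \<epsilon> i l (m - 1) x = max (phi r c c' \<delta> \<epsilon> i l m x) (phi r c c' \<delta> \<epsilon> i l m (x - 1) - \<epsilon>)"
    by (rule phi_m)
  have 3: "phi r c c' \<delta> \<epsilon> i l (m - 1) (x + 1) = max (phi r c c' \<delta> \<epsilon> i l m (x + 1)) (phi r c c' \<delta> \<epsilon> i l m x - \<epsilon>)"
    using phi_m[of r c c' \<delta> \<epsilon> i l m "x + 1"] by simp
  have 4: "Max ((\<lambda>t. phi r c c' \<delta> \<epsilon> i l m (x + t) - (if t = 1 then \<delta> else if t = -1 then \<epsilon> else 0)) ` {-1,0,1})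
     = max (phi r c c' \<delta> \<epsilon> i l m (x - 1) - \<epsilon>) (max (phi r c c' \<delta> \<epsilon> i l m x) (phi r c c' \<delta> \<epsilon> i l m (x + 1) - \<delta>))"
    by simp
  show ?thesis unfolding 1 2 3 4 using dpos epos by (simp add: max_def)
qed

lemma p6: "tau N r c c' \<delta> \<epsilon> (l + 1) (m - 1) n =
       Max ((\<lambda>(k1, k2). Psi N r c c' \<delta> \<epsilon> l m n k1 k2 - real k1 * \<delta> - real k2 * \<epsilon>)
              ` ({0..N} \<times> {0..N}))"
proof -
  define w where "w = (\<lambda>t::int. if t = 1 then \<delta> else if t = -1 then \<epsilon> else 0)"
  let ?E = "Max ((\<lambda>e. G N r c c' \<delta> \<epsilon> l m n e - cost N w e) ` PiE {1..N} (\<lambda>_. {-1,0,1}))"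
  let ?M = "Max ((\<lambda>(k1, k2). Psi N r c c' \<delta> \<epsilon> l m n k1 k2 - real k1 * \<delta> - real k2 * \<epsilon>) ` ({0..N} \<times> {0..N}))"
  have E: "tau N r c c' \<delta> \<epsilon> (l + 1) (m - 1) n = ?E"
    unfolding tau_def w_def by (rule tau_expand) (auto simp: col6)
  have fab: "G N r c c' \<delta> \<epsilon> l m n (eAB N a b) - cost N w (eAB N a b) = tauc N r c c' \<delta> \<epsilon> l m n (int a - 1) (int N - int b) - (real a * \<epsilon> + real b * \<delta>)"
    if "a + b \<le> N" for a b using form[OF that, of w] by (simp add: w_def)
  have finM: "finite ((\<lambda>(k1, k2). Psi N r c c' \<delta> \<epsilon> l m n k1 k2 - real k1 * \<delta> - real k2 * \<epsilon>) ` ({0..N} \<times> {0..N}))" by simp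
  show ?thesis unfolding E
  proof (rule antisym)
    show "?E \<le> ?M"
    proof (rule expand_le)
      show "2 * w 0 \<le> w (-1) + w 1" using dpos epos by (simp add: w_def)
      fix a b assume ab: "a + b \<le> N"
      have "G N r c c' \<delta> \<epsilon> l m n (eAB N a b) - cost N w (eAB N a b) \<le> Psi N r c c' \<delta> \<epsilon> l m n b a - real b * \<delta> - real a * \<epsilon>"
        using fab[OF ab] psi_ge[OF ab] by simp
      also have "\<dots> \<le> ?M" using ab finM by (intro Max_ge) (auto intro!: image_eqI[of _ _ "(b, a)"])
      finally show "G N r c c' \<delta> \<epsilon> l m n (eAB N a b) - cost N w (eAB N a b) \<le> ?M" .
    qed auto
    show "?M \<le> ?E"
    proof (subst Max_le_iff, simp, simp, intro ballI)
      fix x assume "x \<in> (\<lambda>(k1, k2). Psi N r c c' \<delta> \<epsilon> l m n k1 k2 - real k1 * \<delta> - real k2 * \<epsilon>) ` ({0..N} \<times> {0..N})"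
      then obtain k1 k2 where k: "k1 \<le> N" "k2 \<le> N" "x = Psi N r c c' \<delta> \<epsilon> l m n k1 k2 - real k1 * \<delta> - real k2 * \<epsilon>" by auto
      let ?F = "\<lambda>\<alpha>. tauc N r c c' \<delta> \<epsilon> l m n \<alpha> (int N - 1 - int k1 + int k2 - \<alpha>)"
      let ?I = "{max (-1) (int k2 - int k1 - 1)..min (int k2 - 1) (int N - int k1 - 1)}"
      have "?F \<alpha> \<le> ?E + real k1 * \<delta> + real k2 * \<epsilon>" if \<alpha>: "\<alpha> \<in> ?I" for \<alpha>
      proof -
        define a where "a = nat (\<alpha> + 1)"
        define b where "b = nat (int k1 - int k2 + 1 + \<alpha>)"
        have ia: "int a = \<alpha> + 1" and ib: "int b = int k1 - int k2 + 1 + \<alpha>" using \<alpha> by (auto simp: a_def b_def)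
        have ab: "a + b \<le> N" "a \<le> k2" "b \<le> k1" using ia ib \<alpha> by auto
        have e1: "int a - 1 = \<alpha>" "int N - int b = int N - 1 - int k1 + int k2 - \<alpha>" using ia ib by simp_all
        have "?F \<alpha> = tauc N r c c' \<delta> \<epsilon> l m n (int a - 1) (int N - int b)" unfolding e1 by simp
        also have "\<dots> = G N r c c' \<delta> \<epsilon> l m n (eAB N a b) - cost N w (eAB N a b) + (real a * \<epsilon> + real b * \<delta>)"
          using fab[OF ab(1)] by simp
        also have "\<dots> \<le> ?E + (real a * \<epsilon> + real b * \<delta>)"
          using expand_ge[of N a b "{-1,0,1}" r c c' \<delta> \<epsilon> l m n w] by (simp add: eAB_def)
        also have "\<dots> \<le> ?E + real k1 * \<delta> + real k2 * \<epsilon>"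
        proof -
          have "real a * \<epsilon> \<le> real k2 * \<epsilon>" using ab(2) epos by (intro mult_right_mono) auto
          moreover have "real b * \<delta> \<le> real k1 * \<delta>" using ab(3) dpos by (intro mult_right_mono) auto
          ultimately show ?thesis by linarith
        qed
        finally show ?thesis .
      qed
      then have "Max (?F ` ?I) \<le> ?E + real k1 * \<delta> + real k2 * \<epsilon>" using k(1,2) by (subst Max_le_iff) auto
      then show "x \<le> ?E" unfolding k(3) Psi_eq[OF k(1,2)] by simp
    qed
  qed
qed

lemma p7:
  assumes k: "k1 \<in> {1..N}" "k2 \<in> {1..N}"
  shows "(int k2 - 1 < int N - int k1 \<longrightarrow>
           Psi N r c c' \<delta> \<epsilon> l m n k1 k2 =
             max (Psi N r c c' \<delta> \<epsilon> l m n (k1 - 1) (k2 - 1))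
                 (tauc N r c c' \<delta> \<epsilon> l m n (int k2 - 1) (int N - int k1)))
      \<and> (int k2 - 1 > int N - int k1 \<longrightarrow>
           Psi N r c c' \<delta> \<epsilon> l m n (k1 - 1) (k2 - 1) =
             max (Psi N r c c' \<delta> \<epsilon> l m n k1 k2)
                 (tauc N r c c' \<delta> \<epsilon> l m n (int N - int k1) (int k2 - 1)))
      \<and> (int k2 - 1 = int N - int k1 \<longrightarrow>
           Psi N r c c' \<delta> \<epsilon> l m n k1 k2 = Psi N r c c' \<delta> \<epsilon> l m n (k1 - 1) (k2 - 1))"
proof -
  define F where "F = (\<lambda>\<alpha>. tauc N r c c' \<delta> \<epsilon> l m n \<alpha> (int N - 1 - int k1 + int k2 - \<alpha>))"
  define lo where "lo = max (-1) (int k2 - int k1 - 1)"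
  have PA: "Psi N r c c' \<delta> \<epsilon> l m n k1 k2 = Max (F ` {lo..min (int k2 - 1) (int N - int k1 - 1)})"
    unfolding F_def lo_def using k by (intro Psi_eq) auto
  have PB: "Psi N r c c' \<delta> \<epsilon> l m n (k1 - 1) (k2 - 1) = Max (F ` {lo..min (int k2 - 2) (int N - int k1)})"
  proof -
    have "Psi N r c c' \<delta> \<epsilon> l m n (k1 - 1) (k2 - 1) =
      Max ((\<lambda>\<alpha>. tauc N r c c' \<delta> \<epsilon> l m n \<alpha> (int N - 1 - int (k1 - 1) + int (k2 - 1) - \<alpha>)) `
        {max (-1) (int (k2 - 1) - int (k1 - 1) - 1)..min (int (k2 - 1) - 1) (int N - int (k1 - 1) - 1)})"
      using k by (intro Psi_eq) auto
    also have "(\<lambda>\<alpha>. tauc N r c c' \<delta> \<epsilon> l m n \<alpha> (int N - 1 - int (k1 - 1) + int (k2 - 1) - \<alpha>)) = F"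
      unfolding F_def using k by (auto simp: of_nat_diff algebra_simps)
    also have "{max (-1) (int (k2 - 1) - int (k1 - 1) - 1)..min (int (k2 - 1) - 1) (int N - int (k1 - 1) - 1)} = {lo..min (int k2 - 2) (int N - int k1)}"
      unfolding lo_def using k by (auto simp: of_nat_diff)
    finally show ?thesis .
  qed
  have lo1: "lo \<le> int k2 - 2" "lo \<le> int N - int k1 - 1" unfolding lo_def using k by auto
  show ?thesis
  proof (intro conjI impI)
    assume h: "int k2 - 1 < int N - int k1"
    have "min (int k2 - 1) (int N - int k1 - 1) = (int k2 - 2) + 1" "min (int k2 - 2) (int N - int k1) = int k2 - 2" using h by auto
    then show "Psi N r c c' \<delta> \<epsilon> l m n k1 k2 = max (Psi N r c c' \<delta> \<epsilon> l m n (k1 - 1) (k2 - 1)) (tauc N r c c' \<delta> \<epsilon> l m n (int k2 - 1) (int N - int k1))"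
      unfolding PA PB using Max_ins[OF lo1(1), of F] by (simp add: F_def max.commute)
  next
    assume h: "int k2 - 1 > int N - int k1"
    have "min (int k2 - 1) (int N - int k1 - 1) = int N - int k1 - 1" "min (int k2 - 2) (int N - int k1) = (int N - int k1 - 1) + 1" using h by auto
    then show "Psi N r c c' \<delta> \<epsilon> l m n (k1 - 1) (k2 - 1) = max (Psi N r c c' \<delta> \<epsilon> l m n k1 k2) (tauc N r c c' \<delta> \<epsilon> l m n (int N - int k1) (int k2 - 1))"
      unfolding PA PB using Max_ins[OF lo1(2), of F] by (simp add: F_def max.commute)
  next
    assume h: "int k2 - 1 = int N - int k1"
    have "min (int k2 - 1) (int N - int k1 - 1) = int k2 - 2" "min (int k2 - 2) (int N - int k1) = int k2 - 2" using h by auto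
    then show "Psi N r c c' \<delta> \<epsilon> l m n k1 k2 = Psi N r c c' \<delta> \<epsilon> l m n (k1 - 1) (k2 - 1)"
      unfolding PA PB by simp
  qed
qed

end
theorem lemma9:
  fixes N :: nat and r c c' :: "nat \<Rightarrow> real" and \<delta> \<epsilon> :: real and l m n :: int
  assumes "N \<ge> 1" and "\<delta> > 0" and "\<epsilon> > 0"
  shows
    "tau N r c c' \<delta> \<epsilon> (l + 1) m n =
       Max ((\<lambda>k1. tauc N r c c' \<delta> \<epsilon> l m n (-1) (int N - int k1) - real k1 * \<delta>) ` {0..N})
   \<and> tau N r c c' \<delta> \<epsilon> l (m - 1) n =
       Max ((\<lambda>k2. tauc N r c c' \<delta> \<epsilon> l m n (int k2 - 1) (int N) - real k2 * \<epsilon>) ` {0..N})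
   \<and> tau N r c c' \<delta> \<epsilon> (l + 1) m (n - 1) =
       Max ((\<lambda>k1. tauc N r c c' \<delta> \<epsilon> l m n (int N - int k1 - 1) (int N) - real k1 * \<delta>) ` {0..N})
   \<and> tau N r c c' \<delta> \<epsilon> l (m - 1) (n + 1) =
       Max ((\<lambda>k2. tauc N r c c' \<delta> \<epsilon> l m n (-1) (int k2) - real k2 * \<epsilon>) ` {0..N})
   \<and> tau N r c c' \<delta> \<epsilon> l m n = tauc N r c c' \<delta> \<epsilon> l m n (-1) (int N)
   \<and> tau N r c c' \<delta> \<epsilon> (l + 1) (m - 1) n =
       Max ((\<lambda>(k1, k2). Psi N r c c' \<delta> \<epsilon> l m n k1 k2 - real k1 * \<delta> - real k2 * \<epsilon>)
              ` ({0..N} \<times> {0..N}))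
   \<and> (\<forall>k1 \<in> {1..N}. \<forall>k2 \<in> {1..N}.
        (int k2 - 1 < int N - int k1 \<longrightarrow>
           Psi N r c c' \<delta> \<epsilon> l m n k1 k2 =
             max (Psi N r c c' \<delta> \<epsilon> l m n (k1 - 1) (k2 - 1))
                 (tauc N r c c' \<delta> \<epsilon> l m n (int k2 - 1) (int N - int k1)))
      \<and> (int k2 - 1 > int N - int k1 \<longrightarrow>
           Psi N r c c' \<delta> \<epsilon> l m n (k1 - 1) (k2 - 1) =
             max (Psi N r c c' \<delta> \<epsilon> l m n k1 k2)
                 (tauc N r c c' \<delta> \<epsilon> l m n (int N - int k1) (int k2 - 1)))
      \<and> (int k2 - 1 = int N - int k1 \<longrightarrow>
           Psi N r c c' \<delta> \<epsilon> l m n k1 k2 = Psi N r c c' \<delta> \<epsilon> l m n (k1 - 1) (k2 - 1)))"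
  proof -
  have d: "\<delta> > 0" "\<epsilon> > 0" using assms by auto
  show ?thesis
  proof (intro conjI ballI)
    show "tau N r c c' \<delta> \<epsilon> (l + 1) m n =
       Max ((\<lambda>k1. tauc N r c c' \<delta> \<epsilon> l m n (-1) (int N - int k1) - real k1 * \<delta>) ` {0..N})" by (rule p1[OF d])
    show "tau N r c c' \<delta> \<epsilon> l (m - 1) n =
       Max ((\<lambda>k2. tauc N r c c' \<delta> \<epsilon> l m n (int k2 - 1) (int N) - real k2 * \<epsilon>) ` {0..N})" by (rule p2[OF d])
    show "tau N r c c' \<delta> \<epsilon> (l + 1) m (n - 1) =
       Max ((\<lambda>k1. tauc N r c c' \<delta> \<epsilon> l m n (int N - int k1 - 1) (int N) - real k1 * \<delta>) ` {0..N})" by (rule p3[OF d])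
    show "tau N r c c' \<delta> \<epsilon> l (m - 1) (n + 1) =
       Max ((\<lambda>k2. tauc N r c c' \<delta> \<epsilon> l m n (-1) (int k2) - real k2 * \<epsilon>) ` {0..N})" by (rule p4[OF d])
    show "tau N r c c' \<delta> \<epsilon> l m n = tauc N r c c' \<delta> \<epsilon> l m n (-1) (int N)" by (rule p5[OF d])
    show "tau N r c c' \<delta> \<epsilon> (l + 1) (m - 1) n =
       Max ((\<lambda>(k1, k2). Psi N r c c' \<delta> \<epsilon> l m n k1 k2 - real k1 * \<delta> - real k2 * \<epsilon>)
              ` ({0..N} \<times> {0..N}))" by (rule p6[OF d])
    fix k1 k2 assume k: "k1 \<in> {1..N}" "k2 \<in> {1..N}"
    note q = p7[OF d k]
    show "int k2 - 1 < int N - int k1 \<longrightarrow>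
           Psi N r c c' \<delta> \<epsilon> l m n k1 k2 =
             max (Psi N r c c' \<delta> \<epsilon> l m n (k1 - 1) (k2 - 1))
                 (tauc N r c c' \<delta> \<epsilon> l m n (int k2 - 1) (int N - int k1))" using q by blast
    show "int k2 - 1 > int N - int k1 \<longrightarrow>
           Psi N r c c' \<delta> \<epsilon> l m n (k1 - 1) (k2 - 1) =
             max (Psi N r c c' \<delta> \<epsilon> l m n k1 k2)
                 (tauc N r c c' \<delta> \<epsilon> l m n (int N - int k1) (int k2 - 1))" using q by blast
    show "int k2 - 1 = int N - int k1 \<longrightarrow>
           Psi N r c c' \<delta> \<epsilon> l m n k1 k2 = Psi N r c c' \<delta> \<epsilon> l m n (k1 - 1) (k2 - 1)" using q by blast
  qed
qed

end
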